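(* Let $F:\mathbb{R}^p\to\mathbb{R}^p$ be single-valued with $\mathrm{zer}\,F\neq\emptyset$, $L$-Lipschitz continuous, and suppose there exist $x^\star\in\mathrm{zer}\,F$ and $\rho\ge0$ such that $\langle Fx,x-x^\star\rangle\ge-\rho\|Fx\|^2$ for all $x\in\mathrm{dom}\,F$. Let $\kappa_1,\kappa_2\ge0$, $\beta\in(0,1]$, $\eta>0$, and let $\{(x^k,y^k)\}$ be generated by: start from $x^0\in\mathrm{dom}\,F$, set $x^{-1}=y^{-1}:=x^0$, and for $k\ge0$ $$y^k:=x^k-\tfrac{\eta}{\beta}u^k,\qquad x^{k+1}:=x^k-\eta Fy^k,$$ where $u^k\in\mathbb{R}^p$ satisfies $\|Fx^k-u^k\|^2\le\kappa_1\|Fx^k-Fy^{k-1}\|^2+\kappa_2\|Fx^k-Fx^{k-1}\|^2$. For $\gamma>0$ and $r>0$ define $$\mathcal{P}_k:=\|x^k-x^\star\|^2+\tfrac{\kappa_1(1+r)L^2\eta^2}{r\gamma}\|x^k-y^{k-1}\|^2+\tfrac{\kappa_2(1+r)L^2\eta^2}{r\gamma}\|x^k-x^{k-1}\|^2.$$ Then for any $s>0$, $\mu\in[0,1]$ and $k\ge0$, $$\begin{aligned}\mathcal{P}_{k+1}\le{}&\mathcal{P}_k-\Big(\beta-\tfrac{(1+r)L^2\eta^2}{\gamma}-\tfrac{2\mu\rho(1+s)}{s\eta}\Big)\|y^k-x^k\|^2\\&-\Big(\beta-\gamma-\tfrac{\kappa_1(1+r)L^2\eta^2}{r\gamma}-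\tfrac{2\mu\rho(1+s)}{\eta}\Big)\|x^{k+1}-y^k\|^2\\&-\Big(1-\beta-\tfrac{\kappa_2(1+r)L^2\eta^2}{r\gamma}-\tfrac{2(1-\mu)\rho}{\eta}\Big)\|x^{k+1}-x^k\|^2.\end{aligned}$$
   Context: $\mathrm{zer}\,F:=\{x:Fx=0\}$. $F$ is $L$-Lipschitz if $\|Fx-Fy\|\le L\|x-y\|$ for all $x,y\in\mathrm{dom}\,F$. *)

theory Defs
  imports "HOL-Analysis.Analysis"
begin

definition zer :: "('a \<Rightarrow> 'b::zero) \<Rightarrow> 'a set" where
  "zer F = {x. F x = 0}"

text \<open>Potential function P_k (iterates indexed by int, k >= 0, with x(-1), y(-1) given).\<close>
definition Pot :: "real \<Rightarrow> real \<Rightarrow> real \<Rightarrow> real \<Rightarrow> real \<Rightarrow> real \<Rightarrow> 'a::real_normed_vector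
    \<Rightarrow> (int \<Rightarrow> 'a) \<Rightarrow> (int \<Rightarrow> 'a) \<Rightarrow> int \<Rightarrow> real" where
  "Pot \<kappa>1 \<kappa>2 L \<eta> r \<gamma> xs x y k =
     norm (x k - xs)^2
     + \<kappa>1 * (1 + r) * L^2 * \<eta>^2 / (r * \<gamma>) * norm (x k - y (k - 1))^2
     + \<kappa>2 * (1 + r) * L^2 * \<eta>^2 / (r * \<gamma>) * norm (x k - x (k - 1))^2"

end

theory Submission
  imports Defs
begin

lemma ident:
  fixes b d w xs :: "'a::real_inner" and \<eta> \<beta> :: real
  shows "norm (b + d - \<eta> *\<^sub>R w - xs)^2 = norm (b + d - xs)^2 - (1-\<beta>)*norm(\<eta> *\<^sub>R w)^2 - \<beta>*norm d^2
   - \<beta>*norm(d - \<eta> *\<^sub>R w)^2 - 2*\<eta>*inner w (b - xs) - 2*\<eta>*inner w (d - \<eta> *\<^sub>R w) + 2*\<beta>*inner d (d - \<eta> *\<^sub>R w)"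
  unfolding power2_norm_eq_inner by (simp add: inner_simps inner_commute algebra_simps)

lemma two_inner_le:
  fixes p q :: "'a::real_inner" assumes "t > 0"
  shows "2*inner p q \<le> t*norm p^2 + norm q^2/t"
proof -
  have "0 \<le> norm (t *\<^sub>R p - q)^2" by simp
  hence "0 \<le> t*t*norm p^2 - 2*t*inner p q + norm q^2"
    unfolding power2_norm_eq_inner by (simp add: inner_simps inner_commute algebra_simps)
  hence "t*(2*inner p q) \<le> t*(t*norm p^2 + norm q^2/t)" using assms
    by (simp add: algebra_simps)
  thus ?thesis using assms by (meson mult_left_le_imp_le)
qed

lemma sq_split:
  fixes p q :: "'a::real_inner" assumes "t > 0"
  shows "norm (p + q)^2 \<le> (1+t)*norm p^2 + (1 + 1/t)*norm q^2"
proof -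
  have "norm (p+q)^2 = norm p^2 + 2*inner p q + norm q^2"
    unfolding power2_norm_eq_inner by (simp add: inner_simps inner_commute algebra_simps)
  thus ?thesis using two_inner_le[OF assms, of p q] by (simp add: algebra_simps)
qed

lemma final_alg:
  fixes Nc Na A B D E P1 P2 \<eta> \<gamma> r s \<rho> \<mu> \<beta> L \<kappa>1 \<kappa>2 :: real
  assumes pos: "\<eta> > 0" "\<gamma> > 0" "r > 0" "s > 0"
   and S1: "Nc \<le> Na - (1-\<beta>)*A - \<beta>*D - \<beta>*B + 2*\<rho>/\<eta>*A + \<eta>^2/\<gamma>*E + \<gamma>*B"
   and S2: "\<eta>^2/\<gamma>*E \<le> \<eta>^2/\<gamma>*((1+r)*L^2*D + (1+1/r)*(\<kappa>1*L^2*P1 + \<kappa>2*L^2*P2))"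
   and S3: "\<mu>*(2*\<rho>/\<eta>)*A \<le> \<mu>*(2*\<rho>/\<eta>)*((1+s)*B+(1+1/s)*D)"
  shows "Nc + \<kappa>1 * (1 + r) * L^2 * \<eta>^2 / (r * \<gamma>) * B + \<kappa>2 * (1 + r) * L^2 * \<eta>^2 / (r * \<gamma>) * A
    \<le> Na + \<kappa>1 * (1 + r) * L^2 * \<eta>^2 / (r * \<gamma>) * P1 + \<kappa>2 * (1 + r) * L^2 * \<eta>^2 / (r * \<gamma>) * P2
       - (\<beta> - (1 + r) * L^2 * \<eta>^2 / \<gamma> - 2 * \<mu> * \<rho> * (1 + s) / (s * \<eta>)) * D
       - (\<beta> - \<gamma> - \<kappa>1 * (1 + r) * L^2 * \<eta>^2 / (r * \<gamma>) - 2 * \<mu> * \<rho> * (1 + s) / \<eta>) * B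
       - (1 - \<beta> - \<kappa>2 * (1 + r) * L^2 * \<eta>^2 / (r * \<gamma>) - 2 * (1 - \<mu>) * \<rho> / \<eta>) * A"
     (is "?L \<le> ?R")
proof -
  have eq: "?R - ?L = (Na - (1-\<beta>)*A - \<beta>*D - \<beta>*B + 2*\<rho>/\<eta>*A + \<eta>^2/\<gamma>*E + \<gamma>*B - Nc)
     + (\<eta>^2/\<gamma>*((1+r)*L^2*D + (1+1/r)*(\<kappa>1*L^2*P1 + \<kappa>2*L^2*P2)) - \<eta>^2/\<gamma>*E)
     + (\<mu>*(2*\<rho>/\<eta>)*((1+s)*B+(1+1/s)*D) - \<mu>*(2*\<rho>/\<eta>)*A)"
    using pos by (simp add: field_simps)
  have "0 \<le> (Na - (1-\<beta>)*A - \<beta>*D - \<beta>*B + 2*\<rho>/\<eta>*A + \<eta>^2/\<gamma>*E + \<gamma>*B - Nc)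
     + (\<eta>^2/\<gamma>*((1+r)*L^2*D + (1+1/r)*(\<kappa>1*L^2*P1 + \<kappa>2*L^2*P2)) - \<eta>^2/\<gamma>*E)
     + (\<mu>*(2*\<rho>/\<eta>)*((1+s)*B+(1+1/s)*D) - \<mu>*(2*\<rho>/\<eta>)*A)"
    using S1 S2 S3 by (simp only: diff_ge_0_iff_ge add_nonneg_nonneg)
  then have "0 \<le> ?R - ?L" by (simp only: eq)
  thus ?thesis by simp
qed

theorem lemma2:
  fixes F :: "real ^ 'p \<Rightarrow> real ^ 'p"
    and x y u :: "int \<Rightarrow> real ^ 'p"
    and xs :: "real ^ 'p"
    and L \<rho> \<kappa>1 \<kappa>2 \<beta> \<eta> \<gamma> r s \<mu> :: real
    and k :: int
  assumes zer_ne: "zer F \<noteq> {}"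
    and Lip: "L-lipschitz_on UNIV F"
    and xs_zer: "xs \<in> zer F"
    and rho: "\<rho> \<ge> 0"
    and weak_mvi: "\<And>z. inner (F z) (z - xs) \<ge> - \<rho> * norm (F z)^2"
    and k1: "\<kappa>1 \<ge> 0" and k2: "\<kappa>2 \<ge> 0"
    and beta: "0 < \<beta>" "\<beta> \<le> 1"
    and eta: "\<eta> > 0"
    and init_x: "x (-1) = x 0" and init_y: "y (-1) = x 0"
    and y_def: "\<And>j. j \<ge> 0 \<Longrightarrow> y j = x j - (\<eta> / \<beta>) *\<^sub>R u j"
    and x_def: "\<And>j. j \<ge> 0 \<Longrightarrow> x (j + 1) = x j - \<eta> *\<^sub>R F (y j)"
    and u_err: "\<And>j. j \<ge> 0 \<Longrightarrow> norm (F (x j) - u j)^2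
                  \<le> \<kappa>1 * norm (F (x j) - F (y (j - 1)))^2 + \<kappa>2 * norm (F (x j) - F (x (j - 1)))^2"
    and gamma: "\<gamma> > 0" and r: "r > 0"
    and s: "s > 0" and mu: "0 \<le> \<mu>" "\<mu> \<le> 1"
    and k: "k \<ge> 0"
  shows "Pot \<kappa>1 \<kappa>2 L \<eta> r \<gamma> xs x y (k + 1)
    \<le> Pot \<kappa>1 \<kappa>2 L \<eta> r \<gamma> xs x y k
       - (\<beta> - (1 + r) * L^2 * \<eta>^2 / \<gamma> - 2 * \<mu> * \<rho> * (1 + s) / (s * \<eta>)) * norm (y k - x k)^2
       - (\<beta> - \<gamma> - \<kappa>1 * (1 + r) * L^2 * \<eta>^2 / (r * \<gamma>) - 2 * \<mu> * \<rho> * (1 + s) / \<eta>) * norm (x (k + 1) - y k)^2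
       - (1 - \<beta> - \<kappa>2 * (1 + r) * L^2 * \<eta>^2 / (r * \<gamma>) - 2 * (1 - \<mu>) * \<rho> / \<eta>) * norm (x (k + 1) - x k)^2"
  proof -
  define a where "a = x k"
  define b where "b = y k"
  define c where "c = x (k+1)"
  define w where "w = F b"
  define v where "v = u k"
  define d where "d = a - b"
  have L0: "L \<ge> 0" using Lip by (simp add: lipschitz_on_def)
  have Lsq: "norm (F p - F q)^2 \<le> L^2 * norm (p - q)^2" for p q
  proof -
    have "norm (F p - F q) \<le> L * norm (p - q)" using Lip
      by (simp add: lipschitz_on_def dist_norm)
    hence "norm (F p - F q)^2 \<le> (L * norm (p - q))^2"
      by (intro power_mono) auto
    thus ?thesis by (simp add: power_mult_distrib)
  qed
  have hc: "c = a - \<eta> *\<^sub>R w" using x_def[OF k] by (simp add: a_def b_def c_def w_def)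
  have hb: "b = a - (\<eta>/\<beta>) *\<^sub>R v" using y_def[OF k] by (simp add: a_def b_def v_def)
  have hv: "\<beta> *\<^sub>R d = \<eta> *\<^sub>R v" using hb beta by (simp add: d_def)
  have hcv: "c = b + d - \<eta> *\<^sub>R w" using hc by (simp add: d_def)
  define A where "A = norm (c - a)^2"
  define B where "B = norm (c - b)^2"
  define D where "D = norm d^2"
  define E where "E = norm (\<eta> *\<^sub>R (v - w))^2 / \<eta>^2"
  have A_eq: "A = norm (\<eta> *\<^sub>R w)^2" using hc by (simp add: A_def)
  have A_eq2: "A = \<eta>^2 * norm w^2" using A_eq by (simp add: power_mult_distrib)
  have E_eq: "E = norm (w - v)^2" using eta
    by (simp add: E_def power_mult_distrib norm_minus_commute)
  have iden: "norm (c - xs)^2 = norm (a - xs)^2 - (1-\<beta>)*A - \<beta>*D - \<beta>*B - 2*\<eta>*inner w (b - xs)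
      - 2*\<eta>*inner w (c - b) + 2*\<beta>*inner d (c - b)"
  proof -
    have bd: "b + d = a" by (simp add: d_def)
    have hc': "a - \<eta> *\<^sub>R w = c" using hc by simp
    have cb': "d - \<eta> *\<^sub>R w = c - b" using hcv by simp
    show ?thesis using ident[of b d \<eta> w xs \<beta>]
      by (simp only: bd hc' cb' A_eq[symmetric] D_def[symmetric] B_def[symmetric])
  qed
  have cross: "- 2*\<eta>*inner w (c - b) + 2*\<beta>*inner d (c - b) = 2 * inner (\<eta> *\<^sub>R (v - w)) (c - b)"
  proof -
    have "2*\<beta>*inner d (c - b) = 2 * inner (\<beta> *\<^sub>R d) (c - b)" by simp
    also have "\<dots> = 2 * inner (\<eta> *\<^sub>R v) (c - b)" using hv by simp
    finally show ?thesis by (simp add: inner_diff_left algebra_simps)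
  qed
  have yg: "2 * inner (\<eta> *\<^sub>R (v - w)) (c - b) \<le> \<eta>^2/\<gamma>*E + \<gamma>*B"
  proof -
    have "2 * inner (\<eta> *\<^sub>R (v - w)) (c - b) \<le> (1/\<gamma>) * norm (\<eta> *\<^sub>R (v - w))^2 + norm (c - b)^2 / (1/\<gamma>)"
      using two_inner_le[of "1/\<gamma>" "\<eta> *\<^sub>R (v - w)" "c - b"] gamma by simp
    also have "\<dots> = \<eta>^2/\<gamma>*E + \<gamma>*B" using eta by (simp add: E_def B_def)
    finally show ?thesis .
  qed
  have W: "- 2*\<eta>*inner w (b - xs) \<le> 2*\<rho>/\<eta>*A"
  proof -
    have "- 2*\<eta>*inner w (b - xs) \<le> 2*\<eta>*(\<rho> * norm w^2)"
    proof -
      have "\<eta> * (- inner w (b - xs)) \<le> \<eta> * (\<rho> * norm w^2)"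
        using weak_mvi[of b] eta unfolding w_def by (intro mult_left_mono) auto
      thus ?thesis by simp
    qed
    also have "\<dots> = 2*\<rho>/\<eta>*A" using eta by (simp add: A_eq2 power2_eq_square)
    finally show ?thesis .
  qed
  have S1: "norm (c - xs)^2 \<le> norm (a - xs)^2 - (1-\<beta>)*A - \<beta>*D - \<beta>*B + 2*\<rho>/\<eta>*A + \<eta>^2/\<gamma>*E + \<gamma>*B"
    using iden cross yg W by linarith
  define P1 where "P1 = norm (a - y (k - 1))^2"
  define P2 where "P2 = norm (a - x (k - 1))^2"
  have Eb: "E \<le> (1+r)*L^2*D + (1+1/r)*(\<kappa>1*L^2*P1 + \<kappa>2*L^2*P2)"
  proof -
    have "E = norm ((w - F a) + (F a - v))^2" using E_eq by simp
    also have "\<dots> \<le> (1+r)*norm (w - F a)^2 + (1+1/r)*norm (F a - v)^2"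
      using sq_split r by blast
    also have "\<dots> \<le> (1+r)*(L^2*D) + (1+1/r)*(\<kappa>1*L^2*P1 + \<kappa>2*L^2*P2)"
    proof (rule add_mono)
      show "(1+r)*norm (w - F a)^2 \<le> (1+r)*(L^2*D)"
        using Lsq[of b a] r unfolding w_def D_def d_def
        by (intro mult_left_mono) (auto simp: norm_minus_commute)
      have "norm (F a - v)^2 \<le> \<kappa>1 * norm (F a - F (y (k - 1)))^2 + \<kappa>2 * norm (F a - F (x (k - 1)))^2"
        using u_err[OF k] by (simp add: a_def v_def)
      also have "\<dots> \<le> \<kappa>1*(L^2*P1) + \<kappa>2*(L^2*P2)"
        using Lsq[of a "y (k-1)"] Lsq[of a "x (k-1)"] k1 k2 unfolding P1_def P2_def
        by (intro add_mono mult_left_mono) auto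
      finally show "(1+1/r)*norm (F a - v)^2 \<le> (1+1/r)*(\<kappa>1*L^2*P1 + \<kappa>2*L^2*P2)"
        using r by (intro mult_left_mono) (auto simp: algebra_simps)
    qed
    finally show ?thesis by (simp add: algebra_simps)
  qed
  have S2: "\<eta>^2/\<gamma>*E \<le> \<eta>^2/\<gamma>*((1+r)*L^2*D + (1+1/r)*(\<kappa>1*L^2*P1 + \<kappa>2*L^2*P2))"
    using Eb gamma by (intro mult_left_mono) auto
  have Ab: "A \<le> (1+s)*B+(1+1/s)*D"
  proof -
    have "A = norm ((c - b) + (b - a))^2" by (simp add: A_def)
    also have "\<dots> \<le> (1+s)*B+(1+1/s)*D" using sq_split[OF s, of "c - b" "b - a"]
      by (simp add: B_def D_def d_def norm_minus_commute)
    finally show ?thesis .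
  qed
  have S3: "\<mu>*(2*\<rho>/\<eta>)*A \<le> \<mu>*(2*\<rho>/\<eta>)*((1+s)*B+(1+1/s)*D)"
    using Ab mu rho eta by (intro mult_left_mono) auto
  note fin = final_alg[OF eta gamma r s S1 S2 S3]
  have e1: "Pot \<kappa>1 \<kappa>2 L \<eta> r \<gamma> xs x y (k + 1) = norm (c - xs)^2
     + \<kappa>1 * (1 + r) * L^2 * \<eta>^2 / (r * \<gamma>) * B + \<kappa>2 * (1 + r) * L^2 * \<eta>^2 / (r * \<gamma>) * A"
    unfolding Pot_def by (simp add: a_def b_def c_def A_def B_def)
  have e2: "Pot \<kappa>1 \<kappa>2 L \<eta> r \<gamma> xs x y k = norm (a - xs)^2
     + \<kappa>1 * (1 + r) * L^2 * \<eta>^2 / (r * \<gamma>) * P1 + \<kappa>2 * (1 + r) * L^2 * \<eta>^2 / (r * \<gamma>) * P2"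
    unfolding Pot_def by (simp add: a_def P1_def P2_def)
  have e3: "norm (y k - x k)^2 = D" by (simp add: D_def d_def a_def b_def norm_minus_commute)
  have e4: "norm (x (k + 1) - y k)^2 = B" by (simp add: B_def c_def b_def)
  have e5: "norm (x (k + 1) - x k)^2 = A" by (simp add: A_def c_def a_def)
  show ?thesis unfolding e1 e2 e3 e4 e5 by (rule fin)
qed

end
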